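(* Let $M\ge1$, $h_1,\dots,h_M\ge0$, $P_{\rm peak}>0$, $\sigma^2>0$ and $\lambda,\beta\ge0$. Then the problem $\max_{0\le p\le P_{\rm peak},\ 0\le\alpha_m\le1\ (m=1,\dots,M)}\ \log\Big(1+\frac{\sum_{m=1}^M\alpha_m h_mp}{\sigma^2}\Big)+\sum_{m=1}^M\lambda(1-\alpha_m)h_mp-\beta p$ is equivalent to (in particular, has the same optimal value as) the problem $\max_{0\le\alpha\le1,\ 0\le p\le P_{\rm peak}}\ \log\Big(1+\frac{\alpha\sum_{m=1}^M h_mp}{\sigma^2}\Big)+(1-\alpha)\sum_{m=1}^M\lambda h_mp-\beta p.$
   Context: Here $h_m$ is the channel power gain to receive antenna $m$, $\alpha_m$ is the power splitting ratio at antenna $m$, $p$ the transmit power, and $\log$ is the natural logarithm. *)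

theory Defs
  imports "HOL-Analysis.Analysis"
begin

definition obj1 :: "nat \<Rightarrow> (nat \<Rightarrow> real) \<Rightarrow> real \<Rightarrow> real \<Rightarrow> real \<Rightarrow> (nat \<Rightarrow> real) \<Rightarrow> real \<Rightarrow> real" where
  "obj1 M h sig2 lam beta a p =
     ln (1 + (\<Sum>m=1..M. a m * h m * p) / sig2) + (\<Sum>m=1..M. lam * (1 - a m) * h m * p) - beta * p"

definition obj2 :: "nat \<Rightarrow> (nat \<Rightarrow> real) \<Rightarrow> real \<Rightarrow> real \<Rightarrow> real \<Rightarrow> real \<Rightarrow> real \<Rightarrow> real" where
  "obj2 M h sig2 lam beta al p =
     ln (1 + al * (\<Sum>m=1..M. h m * p) / sig2) + (1 - al) * (\<Sum>m=1..M. lam * h m * p) - beta * p"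

end

theory Submission
  imports Defs
begin

lemma obj2_to_obj1: "obj1 M h sig2 lam beta (\<lambda>m. al) p = obj2 M h sig2 lam beta al p"
proof -
  have "(\<Sum>m=1..M. al * h m * p) = al * (\<Sum>m=1..M. h m * p)"
    by (simp add: sum_distrib_left mult.assoc)
  moreover have "(\<Sum>m=1..M. lam * (1 - al) * h m * p) = (1 - al) * (\<Sum>m=1..M. lam * h m * p)"
    by (simp add: sum_distrib_left mult_ac)
  ultimately show ?thesis unfolding obj1_def obj2_def by simp
qed

lemma obj1_to_obj2:
  assumes h: "\<forall>m\<in>{1..M}. h m \<ge> 0" and a: "\<forall>m\<in>{1..M}. 0 \<le> a m \<and> a m \<le> 1"
  shows "\<exists>al. 0 \<le> al \<and> al \<le> 1 \<and> obj1 M h sig2 lam beta a p = obj2 M h sig2 lam beta al p"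
proof -
  define S where "S = (\<Sum>m=1..M. h m)"
  define T where "T = (\<Sum>m=1..M. a m * h m)"
  have T0: "0 \<le> T" unfolding T_def using h a by (intro sum_nonneg) auto
  have TS: "T \<le> S" unfolding T_def S_def using h a
    by (intro sum_mono) (auto intro: mult_left_le_one_le)
  have e1: "(\<Sum>m=1..M. a m * h m * p) = T * p" unfolding T_def by (simp add: sum_distrib_right)
  have e2: "(\<Sum>m=1..M. lam * (1 - a m) * h m * p) = lam * p * (S - T)"
    unfolding T_def S_def by (simp add: sum_distrib_left sum_subtractf[symmetric] algebra_simps)
  have e3: "(\<Sum>m=1..M. h m * p) = S * p" unfolding S_def by (simp add: sum_distrib_right)
  have e4: "(\<Sum>m=1..M. lam * h m * p) = lam * p * S" unfolding S_def by (simp add: sum_distrib_left mult_ac)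
  show ?thesis
  proof (cases "S = 0")
    case True
    then have "T = 0" using T0 TS by simp
    then show ?thesis using True
      by (intro exI[of _ 0]) (simp only: obj1_def obj2_def e1 e2 e3 e4, simp)
  next
    case False
    then have Sp: "S > 0" using T0 TS by simp
    have "T / S * (S * p) = T * p" using Sp by simp
    moreover have "(1 - T / S) * (lam * p * S) = lam * p * (S - T)" using Sp by (simp add: field_simps)
    ultimately show ?thesis using Sp T0 TS
      by (intro exI[of _ "T / S"]) (simp only: obj1_def obj2_def e1 e2 e3 e4, simp add: divide_simps)
  qed
qed

theorem lemma5p2:
  fixes M :: nat and h :: "nat \<Rightarrow> real" and Ppeak sig2 lam beta :: real
  assumes "M \<ge> 1" and "\<forall>m\<in>{1..M}. h m \<ge> 0" and "Ppeak > 0" and "sig2 > 0"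
    and "lam \<ge> 0" and "beta \<ge> 0"
  shows "(SUP (a, p) \<in> {(a, p). 0 \<le> p \<and> p \<le> Ppeak \<and> (\<forall>m\<in>{1..M}. 0 \<le> a m \<and> a m \<le> 1)}.
            obj1 M h sig2 lam beta a p)
       = (SUP (al, p) \<in> {(al, p). 0 \<le> al \<and> al \<le> 1 \<and> 0 \<le> p \<and> p \<le> Ppeak}.
            obj2 M h sig2 lam beta al p)"
proof -
  have "(\<lambda>(a, p). obj1 M h sig2 lam beta a p) ` {(a, p). 0 \<le> p \<and> p \<le> Ppeak \<and> (\<forall>m\<in>{1..M}. 0 \<le> a m \<and> a m \<le> 1)}
      = (\<lambda>(al, p). obj2 M h sig2 lam beta al p) ` {(al, p). 0 \<le> al \<and> al \<le> 1 \<and> 0 \<le> p \<and> p \<le> Ppeak}"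
  proof (intro equalityI subsetI)
    fix y assume "y \<in> (\<lambda>(a, p). obj1 M h sig2 lam beta a p) ` {(a, p). 0 \<le> p \<and> p \<le> Ppeak \<and> (\<forall>m\<in>{1..M}. 0 \<le> a m \<and> a m \<le> 1)}"
    then obtain a p where ap: "0 \<le> p" "p \<le> Ppeak" "\<forall>m\<in>{1..M}. 0 \<le> a m \<and> a m \<le> 1"
      and y: "y = obj1 M h sig2 lam beta a p" by auto
    obtain al where "0 \<le> al" "al \<le> 1" "obj1 M h sig2 lam beta a p = obj2 M h sig2 lam beta al p"
      using obj1_to_obj2[OF assms(2) ap(3)] by blast
    then show "y \<in> (\<lambda>(al, p). obj2 M h sig2 lam beta al p) ` {(al, p). 0 \<le> al \<and> al \<le> 1 \<and> 0 \<le> p \<and> p \<le> Ppeak}"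
      using ap y by (intro image_eqI[of _ _ "(al, p)"]) auto
  next
    fix y assume "y \<in> (\<lambda>(al, p). obj2 M h sig2 lam beta al p) ` {(al, p). 0 \<le> al \<and> al \<le> 1 \<and> 0 \<le> p \<and> p \<le> Ppeak}"
    then obtain al p where ap: "0 \<le> al" "al \<le> 1" "0 \<le> p" "p \<le> Ppeak"
      and y: "y = obj2 M h sig2 lam beta al p" by auto
    show "y \<in> (\<lambda>(a, p). obj1 M h sig2 lam beta a p) ` {(a, p). 0 \<le> p \<and> p \<le> Ppeak \<and> (\<forall>m\<in>{1..M}. 0 \<le> a m \<and> a m \<le> 1)}"
      using ap y obj2_to_obj1[of M h sig2 lam beta al p]
      by (intro image_eqI[of _ _ "(\<lambda>m. al, p)"]) auto
  qed
  then show ?thesis by simp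
qed

end
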